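(* Let $\mathbf A$ be a modular pseudo-Kleene lattice. For any $x,y\in A$, $x\,\mathrm C\,y$ holds if and only if the subalgebra $\mathbf{Sg}(x,y)$ of $\mathbf A$ generated by $x,y$ is a Kleene lattice (i.e. is distributive).
   Context: A pseudo-Kleene lattice is an algebra $(A,\land,\lor,{}',0,1)$ that is a bounded lattice with an antitone involution ${}'$ ($x\leq y\Rightarrow y'\leq x'$, $x''=x$) satisfying $x\land x'\leq y\lor y'$; it is modular if its lattice reduct is modular. For $a,b\in A$, $a\,\mathrm C\,b$ ($a$ commutes with $b$) means: (C1) $a\land(b\lor b')=(a\land b)\lor(a\land b')$; (C2) $b\land(a\lor a')=(b\land a)\lor(b\land a')$; (C3) $a\land a'=((a\land a')\land b)\lor((a\land a')\land b')$. $\mathbf{Sg}(x,y)$ is the smallest subset containing $x,y,0,1$ and closed under $\land,\lor,{}'$. *)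

theory Defs
  imports Main
begin

definition pseudo_kleene :: "('a::bounded_lattice \<Rightarrow> 'a) \<Rightarrow> bool" where
  "pseudo_kleene c \<longleftrightarrow>
     (\<forall>x y. x \<le> y \<longrightarrow> c y \<le> c x) \<and>
     (\<forall>x. c (c x) = x) \<and>
     (\<forall>x y. inf x (c x) \<le> sup y (c y))"

definition modular_lattice :: "'a::lattice itself \<Rightarrow> bool" where
  "modular_lattice _ \<longleftrightarrow>
     (\<forall>x y z::'a. x \<le> z \<longrightarrow> sup x (inf y z) = inf (sup x y) z)"

definition commutes :: "('a::bounded_lattice \<Rightarrow> 'a) \<Rightarrow> 'a \<Rightarrow> 'a \<Rightarrow> bool" where
  "commutes c a b \<longleftrightarrow>
     inf a (sup b (c b)) = sup (inf a b) (inf a (c b)) \<and>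
     inf b (sup a (c a)) = sup (inf b a) (inf b (c a)) \<and>
     inf a (c a) = sup (inf (inf a (c a)) b) (inf (inf a (c a)) (c b))"

inductive_set Sg :: "('a::bounded_lattice \<Rightarrow> 'a) \<Rightarrow> 'a \<Rightarrow> 'a \<Rightarrow> 'a set"
  for c :: "'a \<Rightarrow> 'a" and x y :: 'a where
  gen_x: "x \<in> Sg c x y"
| gen_y: "y \<in> Sg c x y"
| bot: "bot \<in> Sg c x y"
| top: "top \<in> Sg c x y"
| meet: "a \<in> Sg c x y \<Longrightarrow> b \<in> Sg c x y \<Longrightarrow> inf a b \<in> Sg c x y"
| join: "a \<in> Sg c x y \<Longrightarrow> b \<in> Sg c x y \<Longrightarrow> sup a b \<in> Sg c x y"
| compl: "a \<in> Sg c x y \<Longrightarrow> c a \<in> Sg c x y"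

text \<open>A subalgebra (closed subset) is a Kleene lattice iff its lattice reduct is distributive.\<close>
definition distributive_on :: "'a::lattice set \<Rightarrow> bool" where
  "distributive_on S \<longleftrightarrow>
     (\<forall>a\<in>S. \<forall>b\<in>S. \<forall>d\<in>S. inf a (sup b d) = sup (inf a b) (inf a d))"

end

theory Submission
  imports Defs
begin

definition dtrip :: "'a::lattice \<Rightarrow> 'a \<Rightarrow> 'a \<Rightarrow> bool" where
  "dtrip a b d \<longleftrightarrow> inf a (sup b d) = sup (inf a b) (inf a d)"

definition jtrip :: "'a::lattice \<Rightarrow> 'a \<Rightarrow> 'a \<Rightarrow> bool" where
  "jtrip a b d \<longleftrightarrow> sup a (inf b d) = inf (sup a b) (sup a d)"

definition sublat :: "'a::lattice set \<Rightarrow> bool" where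
  "sublat D \<longleftrightarrow> (\<forall>a\<in>D. \<forall>b\<in>D. inf a b \<in> D \<and> sup a b \<in> D)"

definition mdist :: "'a::lattice \<Rightarrow> 'a set \<Rightarrow> bool" where
  "mdist a D \<longleftrightarrow> (\<forall>d\<in>D. \<forall>e\<in>D. dtrip a d e)"

definition ext :: "'a::lattice set \<Rightarrow> 'a \<Rightarrow> 'a set" where
  "ext D a = {sup d1 (inf a d2) | d1 d2. d1 \<in> D \<and> d2 \<in> D \<and> d1 \<le> d2}"

lemma dtrip_swap: "dtrip a b d \<Longrightarrow> dtrip a d b"
  by (simp add: dtrip_def sup_commute)

lemma dtrip_comp: "b \<le> d \<or> d \<le> b \<Longrightarrow> dtrip a b d"
  unfolding dtrip_def
  by (metis inf_mono order_refl sup.absorb1 sup.absorb2 sup_commute)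

lemma chain_mdist: "\<forall>d\<in>D. \<forall>e\<in>D. d \<le> e \<or> e \<le> d \<Longrightarrow> mdist a D"
  by (simp add: mdist_def dtrip_comp)

lemma chain_dist: "\<forall>d\<in>D. \<forall>e\<in>D. d \<le> e \<or> e \<le> d \<Longrightarrow> distributive_on D"
  using dtrip_comp unfolding distributive_on_def dtrip_def by blast

locale modl =
  assumes modu: "\<And>x y z::'a::bounded_lattice. x \<le> z \<Longrightarrow> sup x (inf y z) = inf (sup x y) z"
begin

lemma dtrip_perm:
  fixes a b d :: 'a
  assumes H: "dtrip a b d" shows "dtrip b a d"
proof -
  have H': "inf a (sup b d) = sup (inf a b) (inf a d)" using H by (simp add: dtrip_def)
  have 1: "sup d (inf a (sup b d)) = inf (sup d a) (sup b d)" by (rule modu) simp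
  have 2: "sup d (inf a (sup b d)) = sup d (inf a b)"
    using H' by (metis inf_le2 sup.absorb_iff1 sup.assoc sup.commute)
  have 3: "inf b (sup a d) = inf b (inf (sup b d) (sup a d))"
    by (simp add: inf.absorb1 inf_assoc[symmetric])
  also have "\<dots> = inf b (sup d (inf a b))" using 1 2 by (simp add: inf_commute sup_commute)
  also have "\<dots> = sup (inf a b) (inf d b)"
    using modu[of "inf a b" b d] by (simp add: inf_commute sup_commute)
  finally show ?thesis by (simp add: dtrip_def inf_commute)
qed

lemma dtrip_sym:
  fixes a b d :: 'a
  assumes "dtrip a b d"
  shows "dtrip b a d" "dtrip a d b" "dtrip b d a" "dtrip d a b" "dtrip d b a"
  using assms dtrip_perm dtrip_swap by metis+

lemma jtrip_perm:
  fixes a b d :: 'a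
  assumes H: "jtrip a b d" shows "jtrip b a d"
proof -
  have H': "sup a (inf b d) = inf (sup a b) (sup a d)" using H by (simp add: jtrip_def)
  have 1: "sup (inf b d) (inf a d) = inf (sup (inf b d) a) d" by (rule modu) simp
  have 2: "inf (sup (inf b d) a) d = inf d (sup a b)"
  proof -
    have "inf (sup (inf b d) a) d = inf (inf (sup a b) (sup a d)) d" using H' by (simp add: sup_commute)
    also have "\<dots> = inf (sup a b) (inf (sup a d) d)" by (simp add: inf_assoc)
    also have "inf (sup a d) d = d" by (simp add: inf_absorb2)
    finally show ?thesis by (simp add: inf_commute)
  qed
  have "inf (sup b a) (sup b d) = sup b (inf d (sup b a))"
    using modu[of b "sup b a" d] by (simp add: inf_commute)
  also have "\<dots> = sup b (sup (inf b d) (inf a d))" using 1 2 by (simp add: sup_commute)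
  also have "\<dots> = sup b (inf a d)"
    by (metis inf_le1 sup.absorb_iff1 sup.assoc sup.commute)
  finally show ?thesis by (simp add: jtrip_def)
qed

lemma dtrip_jtrip:
  fixes a b d :: 'a
  assumes H: "dtrip a b d" shows "jtrip a b d"
proof -
  have H2: "inf d (sup a b) = sup (inf d a) (inf d b)" using dtrip_sym(4)[OF H] by (simp add: dtrip_def)
  have "inf (sup a b) (sup a d) = sup a (inf d (sup a b))"
    using modu[of a "sup a b" d] by (simp add: inf_commute sup_commute)
  also have "\<dots> = sup a (sup (inf d a) (inf d b))" using H2 by simp
  also have "\<dots> = sup a (inf b d)"
    by (metis inf_commute inf_le2 sup.absorb_iff1 sup.assoc sup.commute)
  finally show ?thesis by (simp add: jtrip_def)
qed

lemma jtrip_dtrip: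
  fixes a b d :: 'a
  assumes H: "jtrip a b d" shows "dtrip a b d"
proof -
  have Hd: "jtrip d a b" using H jtrip_perm by (metis inf_commute jtrip_def sup_commute)
  have H2: "sup d (inf a b) = inf (sup d a) (sup d b)" using Hd by (simp add: jtrip_def)
  have "sup (inf a b) (inf a d) = inf a (sup d (inf a b))"
    using modu[of "inf a b" a d] by (simp add: inf_commute sup_commute)
  also have "\<dots> = inf a (inf (sup d a) (sup d b))" using H2 by simp
  also have "\<dots> = inf a (sup b d)"
    by (metis inf.assoc inf_sup_absorb sup_commute)
  finally show ?thesis by (simp add: dtrip_def)
qed


lemma f_alt: "d1 \<le> d2 \<Longrightarrow> sup d1 (inf a d2) = inf (sup d1 a) (d2::'a)"
  by (rule modu)

lemma ext_join:
  fixes a :: 'a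
  assumes "mdist a D" "d2 \<in> D" "e2 \<in> D"
  shows "sup (sup d1 (inf a d2)) (sup e1 (inf a e2)) = sup (sup d1 e1) (inf a (sup d2 e2))"
proof -
  have "inf a (sup d2 e2) = sup (inf a d2) (inf a e2)"
    using assms by (simp add: mdist_def dtrip_def)
  then show ?thesis by (simp add: sup_aci)
qed

lemma ext_meet:
  fixes a :: 'a
  assumes "mdist a D" "d1 \<in> D" "e1 \<in> D" "d1 \<le> d2" "e1 \<le> e2"
  shows "inf (sup d1 (inf a d2)) (sup e1 (inf a e2)) = sup (inf d1 e1) (inf a (inf d2 e2))"
proof -
  have J: "sup a (inf d1 e1) = inf (sup a d1) (sup a e1)"
    using assms dtrip_jtrip by (simp add: mdist_def jtrip_def)
  have "inf (sup d1 (inf a d2)) (sup e1 (inf a e2)) = inf (inf (sup d1 a) d2) (inf (sup e1 a) e2)"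
    using assms f_alt by simp
  also have "\<dots> = inf (inf (sup a d1) (sup a e1)) (inf d2 e2)"
    by (simp add: inf_aci sup_commute)
  also have "\<dots> = inf (sup (inf d1 e1) a) (inf d2 e2)" using J by (simp add: sup_commute)
  also have "\<dots> = sup (inf d1 e1) (inf a (inf d2 e2))"
    using assms by (intro f_alt[symmetric]) (meson inf_mono)
  finally show ?thesis .
qed

lemma ext_props:
  fixes a :: 'a
  assumes S: "sublat D" and B: "bot \<in> D" "top \<in> D" and Dd: "distributive_on D"
    and M: "mdist a D"
  shows "sublat (ext D a)" "D \<subseteq> ext D a" "a \<in> ext D a" "distributive_on (ext D a)"
proof -
  have cl: "inf d e \<in> D" "sup d e \<in> D" if "d \<in> D" "e \<in> D" for d e
    using S that by (auto simp: sublat_def)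
  show "sublat (ext D a)"
    unfolding sublat_def
  proof (intro ballI conjI)
    fix P Q assume "P \<in> ext D a" "Q \<in> ext D a"
    then obtain d1 d2 e1 e2 where P: "P = sup d1 (inf a d2)" "d1 \<in> D" "d2 \<in> D" "d1 \<le> d2"
      and Q: "Q = sup e1 (inf a e2)" "e1 \<in> D" "e2 \<in> D" "e1 \<le> e2"
      unfolding ext_def by blast
    have "inf P Q = sup (inf d1 e1) (inf a (inf d2 e2))" using P Q ext_meet M by simp
    moreover have "inf d1 e1 \<le> inf d2 e2" using P Q by (meson inf_mono)
    ultimately show "inf P Q \<in> ext D a" unfolding ext_def using P Q cl by blast
    have "sup P Q = sup (sup d1 e1) (inf a (sup d2 e2))" using P Q ext_join M by simp
    moreover have "sup d1 e1 \<le> sup d2 e2" using P Q by (meson sup_mono)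
    ultimately show "sup P Q \<in> ext D a" unfolding ext_def using P Q cl by blast
  qed
  show "D \<subseteq> ext D a"
  proof
    fix d assume "d \<in> D"
    moreover have "d = sup d (inf a d)" by (metis inf_le2 sup.absorb1)
    ultimately show "d \<in> ext D a" unfolding ext_def by blast
  qed
  have "a = sup bot (inf a top)" by simp
  moreover have "bot \<le> (top::'a)" by simp
  ultimately show "a \<in> ext D a" unfolding ext_def using B by blast
  show "distributive_on (ext D a)"
    unfolding distributive_on_def
  proof (intro ballI)
    fix P Q R assume "P \<in> ext D a" "Q \<in> ext D a" "R \<in> ext D a"
    then obtain d1 d2 e1 e2 g1 g2 where P: "P = sup d1 (inf a d2)" "d1 \<in> D" "d2 \<in> D" "d1 \<le> d2"
      and Q: "Q = sup e1 (inf a e2)" "e1 \<in> D" "e2 \<in> D" "e1 \<le> e2"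
      and R: "R = sup g1 (inf a g2)" "g1 \<in> D" "g2 \<in> D" "g1 \<le> g2"
      unfolding ext_def by blast
    have dd: "inf x (sup y z) = sup (inf x y) (inf x z)" if "x \<in> D" "y \<in> D" "z \<in> D" for x y z
      using Dd that unfolding distributive_on_def by blast
    have QR: "sup Q R = sup (sup e1 g1) (inf a (sup e2 g2))" using Q R ext_join M by simp
    have o1: "sup e1 g1 \<le> sup e2 g2" using Q R by (meson sup_mono)
    have PQ: "inf P Q = sup (inf d1 e1) (inf a (inf d2 e2))"
      unfolding P(1) Q(1) by (rule ext_meet[OF M P(2) Q(2) P(4) Q(4)])
    have PR: "inf P R = sup (inf d1 g1) (inf a (inf d2 g2))"
      unfolding P(1) R(1) by (rule ext_meet[OF M P(2) R(2) P(4) R(4)])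
    have "inf P (sup Q R) = inf (sup d1 (inf a d2)) (sup (sup e1 g1) (inf a (sup e2 g2)))"
      using P(1) QR by simp
    also have "\<dots> = sup (inf d1 (sup e1 g1)) (inf a (inf d2 (sup e2 g2)))"
      by (rule ext_meet[OF M P(2) cl(2)[OF Q(2) R(2)] P(4) o1])
    also have "\<dots> = sup (sup (inf d1 e1) (inf d1 g1)) (inf a (sup (inf d2 e2) (inf d2 g2)))"
      using dd P Q R by simp
    also have "\<dots> = sup (sup (inf d1 e1) (inf a (inf d2 e2))) (sup (inf d1 g1) (inf a (inf d2 g2)))"
      by (rule ext_join[OF M cl(1)[OF P(3) Q(3)] cl(1)[OF P(3) R(3)], symmetric])
    also have "\<dots> = sup (inf P Q) (inf P R)"
      using PQ PR by simp
    finally show "inf P (sup Q R) = sup (inf P Q) (inf P R)" .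
  qed
qed

lemma propag:
  fixes a b :: 'a
  assumes S: "sublat D" and Ma: "mdist a D" and Mb: "mdist b D"
    and T: "\<forall>d\<in>D. dtrip b d a" and Mba: "mdist (inf b a) D" and Mba2: "mdist (sup b a) D"
  shows "mdist b (ext D a)"
proof -
  have cl: "inf d e \<in> D" "sup d e \<in> D" if "d \<in> D" "e \<in> D" for d e
    using S that by (auto simp: sublat_def)
  have hm: "inf b (sup d1 (inf a d2)) = sup (inf b d1) (inf (inf b a) d2)"
    if "d1 \<in> D" "d2 \<in> D" "d1 \<le> d2" for d1 d2
  proof -
    have t: "inf b (sup d1 a) = sup (inf b d1) (inf b a)" using T that by (simp add: dtrip_def)
    have "inf b (sup d1 (inf a d2)) = inf (inf b (sup d1 a)) d2" using f_alt that by (simp add: inf_assoc)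
    also have "\<dots> = inf (sup (inf b d1) (inf b a)) d2" using t by simp
    also have "\<dots> = sup (inf b d1) (inf (inf b a) d2)"
      using that by (intro f_alt[symmetric]) (meson inf.coboundedI2)
    finally show ?thesis .
  qed
  have hj: "sup b (sup d1 (inf a d2)) = inf (sup (sup b a) d1) (sup b d2)"
    if "d1 \<in> D" "d2 \<in> D" "d1 \<le> d2" for d1 d2
  proof -
    have "dtrip b a d2" using T that dtrip_swap by blast
    then have t: "sup b (inf a d2) = inf (sup b a) (sup b d2)"
      using dtrip_jtrip by (simp add: jtrip_def)
    have "sup b (sup d1 (inf a d2)) = sup d1 (sup b (inf a d2))" by (simp add: sup_aci)
    also have "\<dots> = sup d1 (inf (sup b a) (sup b d2))" using t by simp
    also have "\<dots> = inf (sup d1 (sup b a)) (sup b d2)"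
      using that by (intro f_alt) (meson le_supI2)
    finally show ?thesis by (simp add: sup_commute)
  qed
  show ?thesis unfolding mdist_def
  proof (intro ballI)
    fix P Q assume "P \<in> ext D a" "Q \<in> ext D a"
    then obtain d1 d2 e1 e2 where P: "P = sup d1 (inf a d2)" "d1 \<in> D" "d2 \<in> D" "d1 \<le> d2"
      and Q: "Q = sup e1 (inf a e2)" "e1 \<in> D" "e2 \<in> D" "e1 \<le> e2"
      unfolding ext_def by blast
    have o1: "sup d1 e1 \<le> sup d2 e2" "inf d1 e1 \<le> inf d2 e2" using P Q by (auto intro: sup_mono inf_mono le_supI1 le_supI2 le_infI1 le_infI2)
    have m1: "inf b (sup d1 e1) = sup (inf b d1) (inf b e1)"
      and m2: "inf (inf b a) (sup d2 e2) = sup (inf (inf b a) d2) (inf (inf b a) e2)"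
      using Mb Mba P Q by (auto simp: mdist_def dtrip_def)
    have "inf b (sup P Q) = inf b (sup (sup d1 e1) (inf a (sup d2 e2)))"
      using P Q ext_join[OF Ma] by simp
    also have "\<dots> = sup (inf b (sup d1 e1)) (inf (inf b a) (sup d2 e2))"
      using hm[of "sup d1 e1" "sup d2 e2"] P Q cl o1 by simp
    also have "\<dots> = sup (inf b P) (inf b Q)"
      using m1 m2 hm P Q by (simp add: sup_aci)
    finally have X: "inf b (sup P Q) = sup (inf b P) (inf b Q)" .
    have j1: "sup b (inf d2 e2) = inf (sup b d2) (sup b e2)"
      and j2: "sup (sup b a) (inf d1 e1) = inf (sup (sup b a) d1) (sup (sup b a) e1)"
      using Mb Mba2 P Q dtrip_jtrip by (auto simp: mdist_def jtrip_def)
    have "sup b (inf P Q) = sup b (sup (inf d1 e1) (inf a (inf d2 e2)))"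
      using P Q ext_meet[OF Ma] by simp
    also have "\<dots> = inf (sup (sup b a) (inf d1 e1)) (sup b (inf d2 e2))"
      using hj[of "inf d1 e1" "inf d2 e2"] P Q cl o1 by simp
    also have "\<dots> = inf (sup b P) (sup b Q)"
    proof -
      have bP: "sup b P = inf (sup (sup b a) d1) (sup b d2)" using hj[OF P(2-4)] P(1) by simp
      have bQ: "sup b Q = inf (sup (sup b a) e1) (sup b e2)" using hj[OF Q(2-4)] Q(1) by simp
      show ?thesis unfolding bP bQ j1 j2 by (simp add: inf_aci)
    qed
    finally have Y: "sup b (inf P Q) = inf (sup b P) (sup b Q)" .
    show "dtrip b P Q" using X by (simp add: dtrip_def)
  qed
qed

lemma dj: "dtrip a b d \<longleftrightarrow> jtrip a b (d::'a)"
  using dtrip_jtrip jtrip_dtrip by blast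

end


locale mpk = modl +
  fixes c :: "'a::bounded_lattice \<Rightarrow> 'a"
  assumes anti: "\<And>x y. x \<le> y \<Longrightarrow> c y \<le> c x"
    and inv[simp]: "\<And>x. c (c x) = x"
    and kl: "\<And>x y. inf x (c x) \<le> sup y (c y)"
begin

lemma c_le_iff: "c x \<le> c y \<longleftrightarrow> y \<le> x"
  by (metis anti inv)

lemma dm_inf[simp]: "c (inf a b) = sup (c a) (c b)"
proof (rule antisym)
  have "c (sup (c a) (c b)) \<le> inf a b"
    by (metis anti inv le_inf_iff sup_ge1 sup_ge2)
  then show "c (inf a b) \<le> sup (c a) (c b)" by (metis anti inv)
  show "sup (c a) (c b) \<le> c (inf a b)" by (simp add: anti)
qed

lemma dm_sup[simp]: "c (sup a b) = inf (c a) (c b)"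
  by (metis dm_inf inv)

lemma c_bot[simp]: "c bot = top"
  by (metis anti bot_least inv top.extremum_unique)

lemma c_top[simp]: "c top = bot"
  by (metis c_bot inv)

lemma dtrip_c: "dtrip a b d \<Longrightarrow> dtrip (c a) (c b) (c d)"
proof -
  assume "dtrip a b d"
  then have "c (inf a (sup b d)) = c (sup (inf a b) (inf a d))" by (simp add: dtrip_def)
  then have "jtrip (c a) (c b) (c d)" by (simp add: jtrip_def)
  then show ?thesis by (simp add: dj)
qed

lemma pair6:
  assumes "dtrip a y (c y)"
  shows "mdist a {bot, inf y (c y), c y, y, sup y (c y), top}"
proof -
  have "\<forall>d\<in>{bot, inf y (c y), c y, y, sup y (c y), top}. \<forall>e\<in>{bot, inf y (c y), c y, y, sup y (c y), top}.
     d \<le> e \<or> e \<le> d \<or> (d = y \<and> e = c y) \<or> (d = c y \<and> e = y)"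
    by (auto intro: le_supI1 le_infI1 le_supI2 le_infI2)
  then show ?thesis unfolding mdist_def
  proof (intro ballI)
    fix d e assume H: "\<forall>d\<in>{bot, inf y (c y), c y, y, sup y (c y), top}. \<forall>e\<in>{bot, inf y (c y), c y, y, sup y (c y), top}.
     d \<le> e \<or> e \<le> d \<or> (d = y \<and> e = c y) \<or> (d = c y \<and> e = y)"
      and d: "d \<in> {bot, inf y (c y), c y, y, sup y (c y), top}" and e: "e \<in> {bot, inf y (c y), c y, y, sup y (c y), top}"
    from H d e have "d \<le> e \<or> e \<le> d \<or> (d = y \<and> e = c y) \<or> (d = c y \<and> e = y)" using d e by blast
    then show "dtrip a d e"
    proof (elim disjE)
      assume "d \<le> e" then show ?thesis by (intro dtrip_comp) simp
    next
      assume "e \<le> d" then show ?thesis by (intro dtrip_comp) simp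
    next
      assume "d = y \<and> e = c y" then show ?thesis using assms by simp
    next
      assume "d = c y \<and> e = y" then show ?thesis using dtrip_swap[OF assms] by simp
    qed
  qed
qed

lemma main:
  assumes com: "commutes c x y"
  shows "distributive_on (Sg c x y)"
proof -
  define u where "u = inf x (c x)"
  define v where "v = sup x (c x)"
  define p where "p = inf y (c y)"
  define q where "q = sup y (c y)"
  have C1: "dtrip x y (c y)" and C2: "dtrip y x (c x)"
    and C3: "u = sup (inf u y) (inf u (c y))"
    using com by (auto simp: commutes_def dtrip_def u_def)
  have uq: "u \<le> q" and pv: "p \<le> v" using kl by (auto simp: u_def q_def p_def v_def)
  have cu: "c u = v" and cp: "c p = q" by (auto simp: u_def v_def p_def q_def sup_commute)
  have T1: "dtrip (c x) y (c y)" using dtrip_swap[OF dtrip_c[OF C1]] by simp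
  have T2: "dtrip (c y) x (c x)" using dtrip_swap[OF dtrip_c[OF C2]] by simp
  have T4: "dtrip u (inf x y) (inf x (c y))"
  proof -
    have e: "sup (inf x y) (inf x (c y)) = inf x q" using C1 by (simp add: dtrip_def q_def)
    have ux: "u \<le> inf x q" using uq by (simp add: u_def)
    have a: "inf u (sup (inf x y) (inf x (c y))) = u"
      unfolding e using ux by (rule inf.absorb1)
    have b: "sup (inf u (inf x y)) (inf u (inf x (c y))) = u"
      using C3 by (metis inf.absorb1 inf.assoc inf_le1 u_def)
    show ?thesis using a b by (simp add: dtrip_def)
  qed
  have symC3: "dtrip p x (c x)"
  proof -
    have h1: "sup (c x) p = inf (sup (c x) y) (sup (c x) (c y))"
      using dtrip_jtrip[OF T1] by (simp add: jtrip_def p_def)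
    have h2: "inf x (sup y (c x)) = sup (inf x y) u" using dtrip_sym(1)[OF C2] by (simp add: dtrip_def u_def)
    have h3: "inf x (sup (c y) (c x)) = sup (inf x (c y)) u" using dtrip_sym(1)[OF T2] by (simp add: dtrip_def u_def)
    have h4: "sup u (inf (inf x y) (inf x (c y))) = inf (sup u (inf x y)) (sup u (inf x (c y)))"
      using dtrip_jtrip[OF T4] by (simp add: jtrip_def)
    have "inf x (sup p (c x)) = inf x (inf (sup (c x) y) (sup (c x) (c y)))" using h1 by (simp add: sup_commute)
    also have "\<dots> = inf (inf x (sup y (c x))) (inf x (sup (c y) (c x)))" by (simp add: inf_aci sup_commute)
    also have "\<dots> = inf (sup u (inf x y)) (sup u (inf x (c y)))" using h2 h3 by (simp add: sup_commute)
    also have "\<dots> = sup u (inf x p)" using h4 by (simp add: p_def inf_aci)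
    finally have "dtrip x p (c x)" by (simp add: dtrip_def u_def sup_commute)
    then show ?thesis by (rule dtrip_perm)
  qed
  define D1 where "D1 = {bot, y, top}"
  have D1ch: "\<forall>d\<in>D1. \<forall>e\<in>D1. d \<le> e \<or> e \<le> d" by (auto simp: D1_def)
  have D1s: "sublat D1" by (auto simp: D1_def sublat_def)
  have D1d: "distributive_on D1" using chain_dist[OF D1ch] .
  have D1b: "bot \<in> D1" "top \<in> D1" "y \<in> D1" by (auto simp: D1_def)
  define E2 where "E2 = ext D1 (c y)"
  have M2: "mdist (c y) D1" using chain_mdist[OF D1ch] .
  note E2p = ext_props[OF D1s D1b(1,2) D1d M2, folded E2_def]
  have E2sub: "E2 \<subseteq> {bot, p, c y, y, q, top}"
  proof
    fix z assume "z \<in> E2"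
    then obtain d1 d2 where z: "z = sup d1 (inf (c y) d2)" "d1 \<in> D1" "d2 \<in> D1" "d1 \<le> d2"
      unfolding E2_def ext_def by blast
    show "z \<in> {bot, p, c y, y, q, top}"
      using z unfolding D1_def p_def q_def
      by (auto simp: inf_commute sup.absorb1 sup.absorb2)
  qed
  define S6 where "S6 = {bot, p, c y, y, q, top}"
  have mx2: "mdist x E2"
    unfolding E2_def
  proof (rule propag[OF D1s M2 chain_mdist[OF D1ch]])
    show "\<forall>d\<in>D1. dtrip x d (c y)" using C1 by (auto simp: D1_def dtrip_def)
  qed (auto intro: chain_mdist[OF D1ch])
  define E3 where "E3 = ext E2 x"
  have E2b: "bot \<in> E2" "top \<in> E2" using E2p(2) D1b by auto
  note E3p = ext_props[OF E2p(1) E2b E2p(4) mx2, folded E3_def]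
  have mcx2: "mdist (c x) E2"
    unfolding E2_def
  proof (rule propag[OF D1s M2 chain_mdist[OF D1ch]])
    show "\<forall>d\<in>D1. dtrip (c x) d (c y)" using T1 by (auto simp: D1_def dtrip_def)
  qed (auto intro: chain_mdist[OF D1ch])
  have mcx3: "mdist (c x) E3"
    unfolding E3_def
  proof (rule propag[OF E2p(1) mx2 mcx2])
    have t: "dtrip (c x) d x" if "d \<in> S6" for d
    proof -
      have "d = bot \<or> d = p \<or> d = c y \<or> d = y \<or> d = q \<or> d = top" using that by (auto simp: S6_def)
      moreover have "dtrip (c x) bot x" "dtrip (c x) top x" by (simp_all add: dtrip_def)
      moreover have "dtrip (c x) p x" using dtrip_sym[OF symC3] by blast
      moreover have "dtrip (c x) q x" using dtrip_sym[OF dtrip_c[OF symC3]] cp by simp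
      moreover have "dtrip (c x) y x" using dtrip_sym[OF C2] by blast
      moreover have "dtrip (c x) (c y) x" using dtrip_sym[OF dtrip_c[OF C2]] by simp
      ultimately show ?thesis by blast
    qed
    then show "\<forall>d\<in>E2. dtrip (c x) d x" using E2sub by (auto simp: S6_def)
    have "dtrip (inf (c x) x) y (c y)"
    proof -
      have "inf u (sup y (c y)) = u" using uq by (simp add: q_def inf.absorb1)
      then show ?thesis using C3 by (simp add: dtrip_def u_def inf_commute)
    qed
    then show "mdist (inf (c x) x) E2" using pair6 E2sub unfolding mdist_def p_def q_def by blast
    have "jtrip v y (c y)"
    proof -
      have "sup v (inf y (c y)) = v" using pv by (simp add: p_def sup.absorb1)
      moreover have "c u = c (sup (inf u y) (inf u (c y)))" using C3 by simp
      then have "v = inf (sup v (c y)) (sup v y)" using cu by (simp add: sup_commute)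
      then have "v = inf (sup v y) (sup v (c y))" by (simp add: inf_commute)
      ultimately show ?thesis by (simp add: jtrip_def p_def)
    qed
    then have "dtrip (sup (c x) x) y (c y)" using dj by (simp add: v_def sup_commute)
    then show "mdist (sup (c x) x) E2" using pair6 E2sub unfolding mdist_def p_def q_def by blast
  qed
  define E4 where "E4 = ext E3 (c x)"
  have E3b: "bot \<in> E3" "top \<in> E3" using E3p(2) E2b by auto
  note E4p = ext_props[OF E3p(1) E3b E3p(4) mcx3, folded E4_def]
  have inE4: "x \<in> E4" "c x \<in> E4" "y \<in> E4" "c y \<in> E4" "bot \<in> E4" "top \<in> E4"
    using E4p(2,3) E3p(2,3) E2p(2,3) D1b by auto
  have cl4: "inf a b \<in> E4" "sup a b \<in> E4" if "a \<in> E4" "b \<in> E4" for a b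
    using E4p(1) that by (auto simp: sublat_def)
  have "z \<in> E4 \<and> c z \<in> E4" if "z \<in> Sg c x y" for z
    using that
  proof (induction rule: Sg.induct)
    case gen_x then show ?case using inE4 by simp
  next
    case gen_y then show ?case using inE4 by simp
  next
    case bot then show ?case using inE4 by simp
  next
    case top then show ?case using inE4 by simp
  next
    case (meet a b) then show ?case using cl4 by simp
  next
    case (join a b) then show ?case using cl4 by simp
  next
    case (compl a) then show ?case by simp
  qed
  then have "Sg c x y \<subseteq> E4" by blast
  then show ?thesis using E4p(4) unfolding distributive_on_def by blast
qed

lemma converse:
  assumes "distributive_on (Sg c x y)"
  shows "commutes c x y"
proof -
  have m: "x \<in> Sg c x y" "y \<in> Sg c x y" "c x \<in> Sg c x y" "c y \<in> Sg c x y"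
    by (auto intro: Sg.intros)
  have u: "inf x (c x) \<in> Sg c x y" using m by (auto intro: Sg.intros)
  have d: "inf a (sup b e) = sup (inf a b) (inf a e)" if "a \<in> Sg c x y" "b \<in> Sg c x y" "e \<in> Sg c x y" for a b e
    using assms that unfolding distributive_on_def by blast
  have "inf (inf x (c x)) (sup y (c y)) = inf x (c x)" using kl by (simp add: inf.absorb1)
  then show ?thesis unfolding commutes_def using d[OF m(1) m(2) m(4)] d[OF m(2) m(1) m(3)] d[OF u m(2) m(4)]
    by simp
qed

end

theorem theorem4p14:
  fixes c :: "'a::bounded_lattice \<Rightarrow> 'a"
  assumes "pseudo_kleene c"
    and "modular_lattice TYPE('a)"
  shows "commutes c x y \<longleftrightarrow> distributive_on (Sg c x y)"
proof -
  interpret mpk c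
    using assms by unfold_locales (auto simp: pseudo_kleene_def modular_lattice_def)
  show ?thesis using main converse by blast
qed

end
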